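(* Let $(\alpha,s)$ be admissible. Then $\mu^{\alpha}_{s,r}\in\mathcal{UI}$ (and hence $\mu^\alpha_{s,r}$ is $\boxplus$-infinitely divisible) if either (1) $0<\alpha\le1$ and $1\le r\le2$, or (2) $1\le\alpha\le2$ and $1\le r\le\frac{2}{\alpha}$.
   Context: Powers: for $w\in\mathbb{C}\setminus[0,\infty)$ and $p\in\{\alpha,1/\alpha\}$, $w^p:=e^{p\log_{(1)}w}$ with $\operatorname{Im}\log_{(1)}w\in(0,2\pi)$; $w^{1/r}$ is the principal power on $\mathbb{C}\setminus(-\infty,0]$; $r^{1/\alpha}>0$. A pair $(\alpha,s)$ ($0<\alpha\le2$, $s\ne0$, $\arg s\in(-\pi,\pi]$) is admissible if either $0<\alpha\le1$ and $(1-\alpha)\pi\le\arg s\le\pi$, or $1<\alpha\le2$ and $0\le\arg s\le(2-\alpha)\pi$. For $r\ge1$ and admissible $(\alpha,s)$, $\mu^\alpha_{s,r}$ is the probability measure on $\mathbb{R}$ with Cauchy transform $\int\frac{\mu^\alpha_{s,r}(dx)}{z-x}=-r^{1/\alpha}\big(\frac{1-(1-s(-1/z)^{\alpha})^{1/r}}{s}\big)^{1/\alpha}$, $z\in\mathbb{C}_+$. For a probability measure $\mu$, $F_\mu=1/G_\mu$; $\mu\in\mathcal{UI}$ means $F_\mu$ is univalent on $\mathbb{C}_+$ and $F_\mu^{-1}:F_\mu(\mathbb{C}_+)\to\mathbb{C}_+$ extends analytically to a univalent function on all of $\mathbb{C}_+$. *)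

theory Defs
  imports "HOL-Probability.Probability"
begin

text \<open>Argument with values in (0, 2 pi) for w not in [0, infinity), and the
  corresponding branch of the logarithm and of the power w^p.\<close>
definition arg1 :: "complex \<Rightarrow> real" where
  "arg1 w = (if Arg w > 0 then Arg w else Arg w + 2 * pi)"

definition log1 :: "complex \<Rightarrow> complex" where
  "log1 w = complex_of_real (ln (norm w)) + \<i> * complex_of_real (arg1 w)"

definition pow1 :: "complex \<Rightarrow> real \<Rightarrow> complex" where
  "pow1 w p = exp (complex_of_real p * log1 w)"

text \<open>Admissible pairs (alpha, s); Arg s lies in (-pi, pi].\<close>
definition admissible :: "real \<Rightarrow> complex \<Rightarrow> bool" where
  "admissible \<alpha> s \<longleftrightarrow> 0 < \<alpha> \<and> \<alpha> \<le> 2 \<and> s \<noteq> 0 \<and>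
     ((\<alpha> \<le> 1 \<and> (1 - \<alpha>) * pi \<le> Arg s \<and> Arg s \<le> pi) \<or>
      (1 < \<alpha> \<and> 0 \<le> Arg s \<and> Arg s \<le> (2 - \<alpha>) * pi))"

definition cauchy_transform :: "real measure \<Rightarrow> complex \<Rightarrow> complex" where
  "cauchy_transform \<mu> z = (\<integral>x. 1 / (z - complex_of_real x) \<partial>\<mu>)"

definition F_transform :: "real measure \<Rightarrow> complex \<Rightarrow> complex" where
  "F_transform \<mu> z = 1 / cauchy_transform \<mu> z"

definition upper_half :: "complex set" where
  "upper_half = {z. 0 < Im z}"

definition UI :: "real measure \<Rightarrow> bool" where
  "UI \<mu> \<longleftrightarrow> inj_on (F_transform \<mu>) upper_half \<and>
     (\<exists>g. g holomorphic_on upper_half \<and> inj_on g upper_half \<and>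
          (\<forall>z\<in>upper_half. F_transform \<mu> z \<in> upper_half \<longrightarrow> g (F_transform \<mu> z) = z))"

definition mu_G :: "real \<Rightarrow> complex \<Rightarrow> real \<Rightarrow> complex \<Rightarrow> complex" where
  "mu_G \<alpha> s r z = - complex_of_real (r powr (1 / \<alpha>)) *
     pow1 ((1 - (1 - s * pow1 (-1 / z) \<alpha>) powr complex_of_real (1 / r)) / s) (1 / \<alpha>)"

end

theory Submission
  imports Defs
begin


lemma sin_pos_imp_pos: "0 < sin x \<Longrightarrow> -pi < x \<Longrightarrow> x < pi \<Longrightarrow> 0 < (x::real)"
proof (rule ccontr)
  assume "0 < sin x" "-pi < x" "\<not> 0 < x"
  then have "0 \<le> sin (-x)" by (intro sin_ge_zero) auto
  then show False using \<open>0 < sin x\<close> by simp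
qed

lemma sin_neg_imp_neg: "sin x < 0 \<Longrightarrow> -pi < x \<Longrightarrow> x < pi \<Longrightarrow> (x::real) < 0"
  using sin_pos_imp_pos[of "-x"] by auto

lemma Im_Ln_pos: "0 < Im z \<Longrightarrow> 0 < Im (Ln z) \<and> Im (Ln z) < pi"
  by (metis Arg_eq_Im_Ln Arg_lt_pi complex.sel(2) zero_complex.sel(2) less_irrefl)

lemma Im_Ln_neg: "Im z < 0 \<Longrightarrow> -pi < Im (Ln z) \<and> Im (Ln z) < 0"
  by (metis Arg_eq_Im_Ln Arg_neg_iff mpi_less_Arg complex.sel(2) zero_complex.sel(2) less_irrefl)

lemma log1_exp:
  assumes "0 < Im l" "Im l < 2*pi"
  shows "log1 (exp l) = l"
proof (cases "Im l \<le> pi")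
  case True
  then have "Ln (exp l) = l" using assms by (intro Ln_exp) auto
  then have "Arg (exp l) = Im l" by (metis Arg_eq_Im_Ln exp_not_eq_zero)
  then have "arg1 (exp l) = Im l" using assms unfolding arg1_def by auto
  then show ?thesis unfolding log1_def by (simp add: complex_eq_iff)
next
  case False
  define l' where "l' = l - 2 * pi * \<i>"
  have e: "exp l' = exp l" unfolding l'_def
    by (simp add: exp_diff exp_two_pi_i')
  have "Ln (exp l') = l'" using assms False by (intro Ln_exp) (auto simp: l'_def)
  moreover have "Im l' = Im l - 2*pi" by (simp add: l'_def)
  ultimately have "Arg (exp l) = Im l - 2*pi" by (metis Arg_eq_Im_Ln exp_not_eq_zero e)
  then have "arg1 (exp l) = Im l" using assms unfolding arg1_def by auto
  then show ?thesis unfolding log1_def by (simp add: complex_eq_iff)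
qed

lemma pow1_exp:
  assumes "0 < Im l" "Im l < 2*pi"
  shows "pow1 (exp l) p = exp (of_real p * l)"
  using log1_exp[OF assms] unfolding pow1_def by simp

lemma exp_notin_nonpos:
  assumes "-pi < Im l" "Im l < pi"
  shows "exp l \<notin> \<real>\<^sub>\<le>\<^sub>0"
proof
  assume "exp l \<in> \<real>\<^sub>\<le>\<^sub>0"
  then have "Re (exp l) < 0" "Im (exp l) = 0"
    by (auto simp: complex_nonpos_Reals_iff) (metis complex_eq_iff exp_not_eq_zero order_le_less zero_complex.sel)
  then have "Im (Ln (exp l)) = pi" by (subst Im_Ln_eq_pi) auto
  moreover have "Ln (exp l) = l" using assms by (intro Ln_exp) auto
  ultimately show False using assms by simp
qed

lemma between:
  fixes A B d :: real
  assumes "0 < A" "0 < B" "0 < d" "d < pi"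
  shows "\<exists>l. of_real A + of_real B * exp (\<i> * of_real d) = exp l \<and> 0 < Im l \<and> Im l < d"
proof -
  define z where "z = of_real A + of_real B * exp (\<i> * of_real d)"
  have Imz: "Im z = B * sin d" unfolding z_def by (simp add: Im_exp)
  have "0 < sin d" using assms by (intro sin_gt_zero) auto
  then have "0 < Im z" using Imz assms by simp
  then have z0: "z \<noteq> 0" by auto
  define l where "l = Ln z"
  have zl: "z = exp l" using z0 by (simp add: l_def)
  have l: "0 < Im l" "Im l < pi" using Im_Ln_pos[OF \<open>0 < Im z\<close>] by (auto simp: l_def)
  have "z * cis (- d) = of_real A * cis (-d) + of_real B"
  proof -
    have e: "exp (\<i> * of_real d) = cis d" by (simp add: cis_conv_exp)
    have "z * cis (- d) = of_real A * cis (-d) + of_real B * (cis d * cis (-d))"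
      unfolding z_def e by (simp only: distrib_right mult.assoc)
    also have "cis d * cis (-d) = 1" by (simp add: cis_mult)
    finally show ?thesis by simp
  qed
  then have "Im (z * cis (- d)) = - A * sin d" by simp
  also have "\<dots> < 0" using assms \<open>0 < sin d\<close> by simp
  finally have neg: "Im (z * cis (- d)) < 0" .
  have "exp (l - \<i> * of_real d) = z * cis (-d)" using zl
    by (simp add: exp_diff cis_conv_exp exp_minus divide_inverse)
  with neg have "Im (exp (l - \<i> * of_real d)) < 0" by simp
  then have "sin (Im l - d) < 0" by (simp add: Im_exp mult_less_0_iff)
  then have "Im l - d < 0" using l assms sin_neg_imp_neg[of "Im l - d"] by linarith
  then show ?thesis using zl l z_def by auto
qed



lemma sin_neg_of_neg: "-pi < x \<Longrightarrow> x < 0 \<Longrightarrow> sin (x::real) < 0"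
  using sin_gt_zero[of "-x"] by simp

lemma Im_exp_cis: "Im (exp l * cis t) = exp (Re l) * sin (Im l + t)"
  by (simp add: Re_exp Im_exp sin_add algebra_simps)

lemma sin_concave: "concave_on {0..pi} sin"
  by (rule f''_le0_imp_concave[where f'=cos and f''="\<lambda>x. - sin x"])
     (auto intro!: derivative_eq_intros sin_ge_zero)

lemma sin_scale:
  assumes "0 \<le> t" "t \<le> 1" "0 \<le> x" "x \<le> pi"
  shows "t * sin x \<le> sin (t * x)"
proof -
  have "(1 - t) * sin 0 + t * sin x \<le> sin ((1 - t) *\<^sub>R 0 + t *\<^sub>R x)"
    using assms concave_onD[OF sin_concave, of t 0 x] by auto
  then show ?thesis by simp
qed

lemma hard_ineq:
  fixes r c \<mu> :: real
  assumes r: "1 \<le> r" and mu: "0 < \<mu>" "\<mu> < c" and rc: "r*c \<le> pi"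
  shows "sin (r*c) * sin \<mu> powr r \<le> sin (r*\<mu>) * sin c powr r"
proof (cases "r*c = pi")
  case True
  have "r*\<mu> \<le> r*c" using r mu by (intro mult_left_mono) auto
  then have "0 \<le> sin (r*\<mu>)" using r mu True by (intro sin_ge_zero) auto
  then show ?thesis using True by simp
next
  case False
  hence rc': "r*c < pi" using rc by simp
  have c_le: "c \<le> r*c" using r mu by (simp add: mult_le_cancel_right1)
  have pos: "0 < sin x \<and> 0 < sin (r*x)" if "x \<in> {\<mu>..c}" for x
  proof -
    have "r*x \<le> r*c" using that r by (intro mult_left_mono) auto
    moreover have "0 < r*x" using that mu r by simp
    moreover have "x < pi" using that c_le rc' by simp
    moreover have "0 < x" using that mu by simp
    ultimately show ?thesis using rc' \<open>r*x \<le> r*c\<close> by (auto intro!: sin_gt_zero)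
  qed
  define f where "f x = ln (sin (r*x)) - r * ln (sin x)" for x
  have deriv: "DERIV f x :> (r*cos(r*x)/sin(r*x) - r*cos x/sin x)" if "x \<in> {\<mu>..c}" for x
    using pos[OF that] unfolding f_def
    by (auto intro!: derivative_eq_intros simp: field_simps)
  have dle: "r*cos(r*x)/sin(r*x) - r*cos x/sin x \<le> 0" if "x \<in> {\<mu>..c}" for x
  proof -
    from pos[OF that] have p: "0 < sin x" "0 < sin (r*x)" by auto
    have "r*x \<le> r*c" using that r by (intro mult_left_mono) auto
    have "x \<le> r*x" using that r mu by (simp add: mult_le_cancel_right1)
    have "0 < x" using that mu by simp
    have "0 \<le> r*x - x" "r*x - x \<le> pi" using \<open>x \<le> r*x\<close> \<open>0 < x\<close> rc' \<open>r*x \<le> r*c\<close>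
      by linarith+
    then have "0 \<le> sin (r*x - x)" by (rule sin_ge_zero)
    then have "cos (r*x) * sin x \<le> sin (r*x) * cos x" by (simp add: sin_diff algebra_simps)
    then have "cos (r*x) / sin (r*x) \<le> cos x / sin x" using p by (simp add: divide_simps mult.commute)
    then have "r * (cos (r*x) / sin (r*x)) \<le> r * (cos x / sin x)" using r by (intro mult_left_mono) auto
    then show ?thesis by simp
  qed
  have "f c \<le> f \<mu>"
  proof (rule DERIV_nonpos_imp_decreasing_open[of \<mu> c f])
    show "\<mu> \<le> c" using mu by simp
    show "\<exists>y. DERIV f x :> y \<and> y \<le> 0" if "\<mu> < x" "x < c" for x
      using deriv dle that by fastforce
    show "continuous_on {\<mu>..c} f"
      using deriv by (meson DERIV_isCont continuous_at_imp_continuous_on)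
  qed
  then have "ln (sin (r*c)) + r * ln (sin \<mu>) \<le> ln (sin (r*\<mu>)) + r * ln (sin c)"
    unfolding f_def by simp
  then have "exp (ln (sin (r*c)) + r * ln (sin \<mu>)) \<le> exp (ln (sin (r*\<mu>)) + r * ln (sin c))"
    by simp
  moreover have "{\<mu>, c} \<subseteq> {\<mu>..c}" using mu by auto
  ultimately show ?thesis using pos[of \<mu>] pos[of c] mu
    by (simp add: exp_add powr_def mult.commute)
qed

lemma up_T:
  fixes \<beta> c \<rho> \<psi> :: real
  assumes b: "0 < \<beta>" "\<beta> \<le> 1" and c: "0 < c" "c \<le> pi" and \<rho>: "0 < \<rho>"
    and \<psi>: "pi - c < \<psi>" "\<psi> < pi"
  shows "\<exists>l. 1 - (1 - of_real \<rho> * cis \<psi>) powr of_real \<beta> = exp l \<and> pi - c < Im l \<and> Im l < pi"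
proof -
  define V where "V = of_real \<rho> * cis \<psi>"
  define Y where "Y = 1 - V"
  have s\<psi>: "0 < sin \<psi>" using \<psi> c by (intro sin_gt_zero) auto
  have ImY: "Im Y = - \<rho> * sin \<psi>" by (simp add: Y_def V_def)
  have ImYneg: "Im Y < 0" using ImY \<rho> s\<psi> by simp
  hence Y0: "Y \<noteq> 0" by auto
  define L where "L = Ln Y"
  have YL: "Y = exp L" using Y0 by (simp add: L_def)
  define \<eta> where "\<eta> = - Im L"
  have \<eta>: "0 < \<eta>" "\<eta> < pi" using Im_Ln_neg[OF ImYneg] by (auto simp: \<eta>_def L_def)
  define R where "R = exp (Re L)"
  define e where "e = exp (\<beta> * Re L)"
  define R1 where "R1 = exp ((1-\<beta>) * Re L)"
  have ReY: "Re Y = R * cos \<eta>" and ImY': "Im Y = - R * sin \<eta>"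
    using YL by (simp_all add: R_def \<eta>_def Re_exp Im_exp)
  define E where "E = exp (of_real \<beta> * L)"
  have pw: "Y powr of_real \<beta> = E" using Y0 by (simp add: powr_def E_def L_def mult.commute)
  have ReE: "Re E = e * cos (\<beta>*\<eta>)" and ImE: "Im E = - e * sin (\<beta>*\<eta>)"
    by (simp_all add: E_def e_def \<eta>_def Re_exp Im_exp)
  define T where "T = 1 - E"
  have ImT: "Im T = e * sin (\<beta>*\<eta>)" by (simp add: T_def ImE)
  have "\<beta>*\<eta> \<le> \<eta>" using b \<eta> by (simp add: mult_le_cancel_right1)
  then have "\<beta>*\<eta> < pi" using \<eta> by linarith
  then have sb: "0 < sin (\<beta>*\<eta>)" using b \<eta> by (intro sin_gt_zero) auto
  have epos: "0 < e" by (simp add: e_def)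
  have ImTpos: "0 < Im T" using ImT sb epos by simp
  hence T0: "T \<noteq> 0" by auto
  define l where "l = Ln T"
  have Tl: "T = exp l" using T0 by (simp add: l_def)
  have l: "0 < Im l" "Im l < pi" using Im_Ln_pos[OF ImTpos] by (auto simp: l_def)
  have s1: "sin ((1-\<beta>)*\<eta>) = sin \<eta> * cos (\<beta>*\<eta>) - cos \<eta> * sin (\<beta>*\<eta>)"
    by (simp add: left_diff_distrib sin_diff)
  have cY: "cnj V = 1 - cnj Y" by (simp add: Y_def)
  have imc: "Im (T * cnj V) = - R * sin \<eta> + e * sin (\<beta>*\<eta>) + e * R * sin ((1-\<beta>)*\<eta>)"
    unfolding cY T_def s1 by (simp add: ReY ImY' ReE ImE algebra_simps)
  have sn: "0 < sin \<eta>" using \<eta> by (intro sin_gt_zero) auto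
  have A1: "\<beta> * sin \<eta> \<le> sin (\<beta>*\<eta>)" using b \<eta> by (intro sin_scale) auto
  have A2: "(1-\<beta>) * sin \<eta> \<le> sin ((1-\<beta>)*\<eta>)" using b \<eta> by (intro sin_scale) auto
  have RR: "R = e * R1" by (simp add: R_def e_def R1_def flip: exp_add) (simp add: algebra_simps)
  have Rpos: "0 < R" by (simp add: R_def)
  have "1 powr \<beta> * R powr (1-\<beta>) \<le> \<beta> * 1 + (1-\<beta>) * R"
    using b Rpos by (intro Youngs_inequality_0) auto
  moreover have "R powr (1-\<beta>) = R1" using Rpos by (simp add: powr_def R1_def R_def mult.commute)
  ultimately have Y1: "R1 \<le> \<beta> + (1-\<beta>) * R" by simp
  have "R * sin \<eta> = e * (R1 * sin \<eta>)" by (simp add: RR)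
  also have "\<dots> \<le> e * ((\<beta> + (1-\<beta>) * R) * sin \<eta>)"
    using Y1 sn epos by (intro mult_left_mono mult_right_mono) auto
  also have "\<dots> = e * (\<beta> * sin \<eta>) + e * R * ((1-\<beta>) * sin \<eta>)" by (simp add: algebra_simps)
  also have "\<dots> \<le> e * sin (\<beta>*\<eta>) + e * R * sin ((1-\<beta>)*\<eta>)"
    using A1 A2 epos Rpos by (intro add_mono mult_left_mono) auto
  finally have key: "0 \<le> Im (T * cnj V)" using imc by simp
  have "T * cnj V = of_real \<rho> * (exp l * cis (- \<psi>))" by (simp add: Tl V_def cis_cnj)
  then have "Im (T * cnj V) = \<rho> * Im (exp l * cis (- \<psi>))" by simp
  also have "\<dots> = \<rho> * (exp (Re l) * sin (Im l + - \<psi>))" by (simp only: Im_exp_cis)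
  finally have "Im (T * cnj V) = \<rho> * (exp (Re l) * sin (Im l + - \<psi>))" .
  then have "0 \<le> sin (Im l - \<psi>)" using key \<rho> by (simp add: zero_le_mult_iff)
  then have "\<psi> \<le> Im l" using sin_neg_of_neg[of "Im l - \<psi>"] l \<psi> by (cases "Im l - \<psi> < 0") auto
  moreover have "1 - (1 - of_real \<rho> * cis \<psi>) powr of_real \<beta> = exp l"
    using pw Tl by (simp add: T_def Y_def V_def)
  ultimately show ?thesis using l \<psi> by auto
qed

lemma up_Tp:
  fixes r c \<rho> \<psi> :: real
  assumes r: "1 \<le> r" and c: "0 < c" "c \<le> pi" "r*c \<le> 2*pi" and \<rho>: "0 < \<rho>"
    and \<psi>: "pi - c < \<psi>" "\<psi> < pi"
  shows "\<exists>l. 1 - (1 - of_real \<rho> * cis \<psi>) powr of_real r = exp l \<and> pi - r*c < Im l \<and> Im l < pi"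
proof -
  define V where "V = of_real \<rho> * cis \<psi>"
  define Y where "Y = 1 - V"
  have s\<psi>: "0 < sin \<psi>" using \<psi> c by (intro sin_gt_zero) auto
  have ImY: "Im Y = - \<rho> * sin \<psi>" by (simp add: Y_def V_def)
  have ImYneg: "Im Y < 0" using ImY \<rho> s\<psi> by simp
  hence Y0: "Y \<noteq> 0" by auto
  define L where "L = Ln Y"
  have YL: "Y = exp L" using Y0 by (simp add: L_def)
  define \<eta> where "\<eta> = - Im L"
  have \<eta>: "0 < \<eta>" "\<eta> < pi" using Im_Ln_neg[OF ImYneg] by (auto simp: \<eta>_def L_def)
  define R where "R = exp (Re L)"
  have Rpos: "0 < R" by (simp add: R_def)
  have i0: "Im (Y * cis c) = R * sin (Im L + c)" unfolding YL R_def by (rule Im_exp_cis)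
  have "Im L + c = c - \<eta>" by (simp add: \<eta>_def)
  then have i1: "Im (Y * cis c) = R * sin (c - \<eta>)" using i0 by (simp only:)
  have "Y * cis c = cis c - of_real \<rho> * cis (\<psi> + c)" by (simp add: Y_def V_def algebra_simps cis_mult)
  then have "Im (Y * cis c) = sin c - \<rho> * sin (\<psi> + c)" by simp
  also have "sin (\<psi> + c) = - sin (\<psi> + c - pi)" by (simp add: sin_diff)
  finally have i2: "Im (Y * cis c) = sin c + \<rho> * sin (\<psi> + c - pi)" by simp
  have "0 < sin (\<psi> + c - pi)" using \<psi> c by (intro sin_gt_zero) auto
  then have mu_ineq: "sin c < R * sin (c - \<eta>)" using i1 i2 \<rho> by (simp add: mult_pos_neg)
  have sc0: "0 \<le> sin c" using c by (intro sin_ge_zero) auto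
  have "0 < R * sin (c - \<eta>)" using mu_ineq sc0 by simp
  then have "0 < sin (c - \<eta>)" using Rpos by (simp add: zero_less_mult_iff)
  then have eta_c: "\<eta> < c" using sin_pos_imp_pos[of "c - \<eta>"] c \<eta> by simp
  define Rr where "Rr = exp (r * Re L)"
  have Rrpos: "0 < Rr" by (simp add: Rr_def)
  define \<delta> where "\<delta> = pi - r*\<eta>"
  have req: "r*\<eta> < r*c" using eta_c r by simp
  have "0 < r*\<eta>" using r \<eta> by simp
  note rpos_eta = this
  then have d1: "- pi < \<delta>" "\<delta> < pi" using req c(3) unfolding \<delta>_def by linarith+
  have pw: "Y powr of_real r = exp (of_real r * L)" using Y0 by (simp add: powr_def L_def mult.commute)
  have "exp (of_real r * L) = of_real Rr * cis (- (r*\<eta>))"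
    using exp_eq_polar[of "of_real r * L"] by (simp add: Rr_def \<eta>_def)
  moreover have "cis \<delta> = - cis (- (r*\<eta>))" by (simp add: \<delta>_def complex_eq_iff cos_diff sin_diff)
  ultimately have Tform: "1 - Y powr of_real r = 1 + of_real Rr * cis \<delta>" using pw by simp
  have goal_eq: "1 - (1 - of_real \<rho> * cis \<psi>) powr of_real r = 1 + of_real Rr * cis \<delta>"
    using Tform by (simp add: Y_def V_def)
  consider "0 < \<delta>" | "\<delta> = 0" | "\<delta> < 0" by linarith
  then show ?thesis
  proof cases
    case 1
    obtain l where l: "1 + of_real Rr * exp (\<i> * of_real \<delta>) = exp l" "0 < Im l" "Im l < \<delta>"
      using between[of 1 Rr \<delta>] 1 d1 Rrpos by auto
    have el: "1 + of_real Rr * cis \<delta> = exp l" using l by (simp add: cis_conv_exp)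
    have "pi - r*c < Im l"
    proof (cases "pi < r*c")
      case True then show ?thesis using l by simp
    next
      case False
      then have rc: "r*c \<le> pi" by simp
      define \<mu> where "\<mu> = c - \<eta>"
      have mu: "0 < \<mu>" "\<mu> < c" using eta_c \<eta> by (auto simp: \<mu>_def)
      have "r*\<mu> = r*c - r*\<eta>" by (simp add: \<mu>_def algebra_simps)
      then have rmu: "0 < r*\<mu>" "r*\<mu> < pi" using rpos_eta rc req by linarith+
      have srmu: "0 < sin (r*\<mu>)" using rmu by (intro sin_gt_zero) auto
      have smu: "0 < sin \<mu>" using mu c by (intro sin_gt_zero) auto
      have big: "sin (r*c) < Rr * sin (r*\<mu>)"
      proof (cases "sin c = 0")
        case True
        then have "c = pi" using c sin_gt_zero[of c] by (cases "c < pi") auto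
        then have "r = 1" using rc r by simp
        then have "sin (r*c) = 0" using \<open>c = pi\<close> by simp
        then show ?thesis using Rrpos srmu by simp
      next
        case False
        then have scp: "0 < sin c" using sc0 by simp
        have "sin c / sin \<mu> < R" using mu_ineq smu by (simp add: \<mu>_def field_simps)
        then have "(sin c / sin \<mu>) powr r < R powr r" using scp smu r
          by (intro powr_less_mono2) auto
        moreover have "R powr r = Rr" using Rpos by (simp add: powr_def Rr_def R_def mult.commute)
        ultimately have "sin c powr r / sin \<mu> powr r < Rr"
          using scp smu by (simp add: powr_divide)
        then have "sin c powr r < Rr * sin \<mu> powr r" using smu by (simp add: field_simps)
        then have "sin c powr r * sin (r*\<mu>) < Rr * sin \<mu> powr r * sin (r*\<mu>)"
          using srmu by simp
        moreover have "sin (r*c) * sin \<mu> powr r \<le> sin (r*\<mu>) * sin c powr r"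
          using hard_ineq[OF r mu rc] .
        ultimately have "sin (r*c) * sin \<mu> powr r < (Rr * sin (r*\<mu>)) * sin \<mu> powr r"
          by (simp add: algebra_simps)
        then show ?thesis using smu by simp
      qed
      have A: "cis (r*c - pi) = - cis (r*c)" by (simp add: complex_eq_iff cos_diff sin_diff)
      have "exp l * cis (r*c - pi) = - (cis (r*c) + of_real Rr * (cis \<delta> * cis (r*c)))"
        unfolding A el[symmetric] by (simp add: algebra_simps)
      also have "cis \<delta> * cis (r*c) = cis (r*\<mu> + pi)"
        by (simp add: cis_mult \<delta>_def \<mu>_def algebra_simps)
      also have "cis (r*\<mu> + pi) = - cis (r*\<mu>)" by (simp add: complex_eq_iff cos_add sin_add)
      finally have "exp l * cis (r*c - pi) = of_real Rr * cis (r*\<mu>) - cis (r*c)" by simp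
      then have "Im (exp l * cis (r*c - pi)) = Rr * sin (r*\<mu>) - sin (r*c)" by simp
      moreover have "Im (exp l * cis (r*c - pi)) = exp (Re l) * sin (Im l + (r*c - pi))" by (rule Im_exp_cis)
      ultimately have "0 < exp (Re l) * sin (Im l + (r*c - pi))" using big by simp
      then have "0 < sin (Im l + (r*c - pi))" by (simp add: zero_less_mult_iff)
      then have "0 < Im l + (r*c - pi)"
        using sin_pos_imp_pos[of "Im l + (r*c - pi)"] l rc d1 \<open>0 < r*\<mu>\<close> \<open>r*\<mu> = r*c - r*\<eta>\<close> rpos_eta by linarith
      then show ?thesis by simp
    qed
    then show ?thesis using el goal_eq l d1 by auto
  next
    case 2
    have e: "1 + of_real Rr * cis \<delta> = exp (of_real (ln (1 + Rr)))"
      using 2 Rrpos by (simp add: exp_of_real)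
    have "r*\<eta> = pi" using 2 by (simp add: \<delta>_def)
    then have "pi < r*c" using req by simp
    then show ?thesis using e goal_eq by (intro exI[of _ "of_real (ln (1 + Rr))"]) auto
  next
    case 3
    obtain l where l: "1 + of_real Rr * exp (\<i> * of_real (-\<delta>)) = exp l" "0 < Im l" "Im l < -\<delta>"
      using between[of 1 Rr "-\<delta>"] 3 d1 Rrpos by auto
    have "cnj (1 + of_real Rr * cis \<delta>) = exp l" using l by (simp add: cis_conv_exp exp_cnj)
    then have e: "1 + of_real Rr * cis \<delta> = exp (cnj l)" by (metis complex_cnj_cnj exp_cnj)
    have "pi - r*c < \<delta>" using req by (simp add: \<delta>_def)
    then show ?thesis using e goal_eq l 3 d1 by (intro exI[of _ "cnj l"]) auto
  qed
qed

lemma exp_polar_cis: "exp LV = of_real (exp (Re LV)) * cis (Im LV)"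
  using exp_eq_polar[of LV] by simp

lemma wrapper:
  fixes p K a b :: real and LV :: complex
  assumes up: "\<And>c \<rho> \<psi>. 0 < c \<Longrightarrow> c \<le> pi \<Longrightarrow> K*c \<le> 2*pi \<Longrightarrow> 0 < \<rho> \<Longrightarrow> pi - c < \<psi> \<Longrightarrow> \<psi> < pi \<Longrightarrow>
       \<exists>l. 1 - (1 - of_real \<rho> * cis \<psi>) powr of_real p = exp l \<and> pi - K*c < Im l \<and> Im l < pi"
    and p: "0 < p" and K: "0 < K"
    and ab: "0 \<le> a" "a \<le> pi" "pi \<le> b" "b \<le> 2*pi" "K*(b-a) \<le> 2*pi"
    and LV: "a < Im LV" "Im LV < b"
  shows "\<exists>l. 1 - (1 - exp LV) powr of_real p = exp l \<and> pi - K*(pi - a) < Im l \<and> Im l < pi + K*(b - pi)"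
proof -
  define \<rho> where "\<rho> = exp (Re LV)"
  define \<psi> where "\<psi> = Im LV"
  have \<rho>: "0 < \<rho>" by (simp add: \<rho>_def)
  have V: "exp LV = of_real \<rho> * cis \<psi>" by (simp add: \<rho>_def \<psi>_def exp_polar_cis)
  consider "\<psi> < pi" | "\<psi> = pi" | "pi < \<psi>" by linarith
  then show ?thesis
  proof cases
    case 1
    define c where "c = pi - a"
    have c: "0 < c" "c \<le> pi" using 1 LV ab by (auto simp: c_def \<psi>_def)
    have "K*c \<le> K*(b-a)" using K ab by (intro mult_left_mono) (auto simp: c_def)
    then have Kc: "K*c \<le> 2*pi" using ab by simp
    obtain l where l: "1 - (1 - of_real \<rho> * cis \<psi>) powr of_real p = exp l" "pi - K*c < Im l" "Im l < pi"
      using up[OF c Kc \<rho>, of \<psi>] 1 LV by (auto simp: c_def \<psi>_def)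
    have "0 \<le> K*(b - pi)" using K ab by simp
    then show ?thesis using l V by (intro exI[of _ l]) (auto simp: c_def)
  next
    case 2
    have V': "exp LV = - of_real \<rho>" using V 2 by simp
    have q: "1 < (1 + \<rho>) powr p" using \<rho> p by simp
    have "(1 - exp LV) powr of_real p = of_real ((1 + \<rho>) powr p)"
      using V' \<rho> powr_of_real[of "1 + \<rho>" p] by simp
    then have e: "1 - (1 - exp LV) powr of_real p = of_real (1 - (1 + \<rho>) powr p)" by simp
    define l where "l = Ln (of_real (1 - (1 + \<rho>) powr p) :: complex)"
    have nz: "(of_real (1 - (1 + \<rho>) powr p) :: complex) \<noteq> 0" using q by simp
    have el: "exp l = of_real (1 - (1 + \<rho>) powr p)" using nz by (simp add: l_def)
    have "Im l = pi" unfolding l_def using nz q by (subst Im_Ln_eq_pi) auto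
    moreover have "a < pi" "pi < b" using LV 2 by (auto simp: \<psi>_def)
    ultimately show ?thesis using e el K by (intro exI[of _ l]) auto
  next
    case 3
    define c where "c = b - pi"
    have c: "0 < c" "c \<le> pi" using 3 LV ab by (auto simp: c_def \<psi>_def)
    have "K*c \<le> K*(b-a)" using K ab by (intro mult_left_mono) (auto simp: c_def)
    then have Kc: "K*c \<le> 2*pi" using ab by simp
    obtain l where l: "1 - (1 - of_real \<rho> * cis (2*pi - \<psi>)) powr of_real p = exp l" "pi - K*c < Im l" "Im l < pi"
      using up[OF c Kc \<rho>, of "2*pi - \<psi>"] 3 LV by (auto simp: c_def \<psi>_def)
    have cc: "cis (2*pi - \<psi>) = cnj (cis \<psi>)" by (simp add: complex_eq_iff cos_diff sin_diff)
    have "sin \<psi> < 0" using 3 LV ab sin_gt_zero[of "\<psi> - pi"] by (auto simp: \<psi>_def sin_diff)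
    then have nreal: "Im (1 - of_real \<rho> * cis \<psi>) \<noteq> 0" using \<rho> by simp
    have "cnj ((1 - of_real \<rho> * cis \<psi>) powr of_real p) = (1 - of_real \<rho> * cis (2*pi - \<psi>)) powr of_real p"
      using nreal by (subst cnj_powr) (auto simp: cc)
    then have "cnj (1 - (1 - of_real \<rho> * cis \<psi>) powr of_real p) = exp l" using l by simp
    then have "1 - (1 - exp LV) powr of_real p = exp (cnj l)" using V by (metis complex_cnj_cnj exp_cnj)
    also have "exp (cnj l) = exp (cnj l + 2 * pi * \<i>)" by (simp add: exp_add exp_two_pi_i')
    moreover have "0 \<le> K*(pi - a)" using K ab by simp
    ultimately show ?thesis using l by (intro exI[of _ "cnj l + 2 * pi * \<i>"]) (auto simp: c_def)
  qed
qed

lemma one_minus_exp: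
  fixes a b :: real and LV :: complex
  assumes ab: "0 \<le> a" "a \<le> pi" "pi \<le> b" "b \<le> 2*pi" and LV: "a < Im LV" "Im LV < b"
  shows "\<exists>m. 1 - exp LV = exp m \<and> a - pi < Im m \<and> Im m < b - pi"
proof -
  define \<rho> where "\<rho> = exp (Re LV)"
  define \<psi> where "\<psi> = Im LV"
  have \<rho>: "0 < \<rho>" by (simp add: \<rho>_def)
  have V: "exp LV = of_real \<rho> * cis \<psi>" by (simp add: \<rho>_def \<psi>_def exp_polar_cis)
  define Y where "Y = 1 - exp LV"
  have ImY: "Im Y = - \<rho> * sin \<psi>" by (simp add: Y_def V)
  have "Y * cis (pi - \<psi>) = cis (pi - \<psi>) - of_real \<rho> * (cis \<psi> * cis (pi - \<psi>))"
    by (simp add: Y_def V algebra_simps)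
  also have "cis \<psi> * cis (pi - \<psi>) = -1" by (simp add: cis_mult)
  finally have "Im (Y * cis (pi - \<psi>)) = sin \<psi>" by simp
  then have rot: "Im (exp (Ln Y) * cis (pi - \<psi>)) = sin \<psi>" if "Y \<noteq> 0" using that by simp
  consider "\<psi> < pi" | "\<psi> = pi" | "pi < \<psi>" by linarith
  then show ?thesis
  proof cases
    case 1
    have s: "0 < sin \<psi>" using 1 LV ab by (intro sin_gt_zero) (auto simp: \<psi>_def)
    then have ImYn: "Im Y < 0" using ImY \<rho> by simp
    then have Y0: "Y \<noteq> 0" by auto
    have m: "-pi < Im (Ln Y)" "Im (Ln Y) < 0" using Im_Ln_neg[OF ImYn] by auto
    have "0 < exp (Re (Ln Y)) * sin (Im (Ln Y) + (pi - \<psi>))"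
      using rot[OF Y0] s by (simp only: Im_exp_cis)
    then have "0 < sin (Im (Ln Y) + (pi - \<psi>))" by (simp add: zero_less_mult_iff)
    then have "0 < Im (Ln Y) + (pi - \<psi>)"
      using sin_pos_imp_pos[of "Im (Ln Y) + (pi - \<psi>)"] m 1 LV ab by (simp add: \<psi>_def)
    then show ?thesis using Y0 m ab LV by (intro exI[of _ "Ln Y"]) (auto simp: Y_def \<psi>_def)
  next
    case 2
    have "1 - exp LV = of_real (1 + \<rho>)" using V 2 by simp
    then have "1 - exp LV = exp (of_real (ln (1 + \<rho>)))" using \<rho> by (simp add: exp_of_real)
    moreover have "a < pi" "pi < b" using LV 2 by (auto simp: \<psi>_def)
    ultimately show ?thesis by (intro exI[of _ "of_real (ln (1 + \<rho>))"]) auto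
  next
    case 3
    have s: "sin \<psi> < 0" using 3 LV ab sin_gt_zero[of "\<psi> - pi"] by (auto simp: \<psi>_def sin_diff)
    then have ImYp: "0 < Im Y" using ImY \<rho> by (simp add: mult_pos_neg)
    then have Y0: "Y \<noteq> 0" by auto
    have m: "0 < Im (Ln Y)" "Im (Ln Y) < pi" using Im_Ln_pos[OF ImYp] by auto
    have "exp (Re (Ln Y)) * sin (Im (Ln Y) + (pi - \<psi>)) < 0"
      using rot[OF Y0] s by (simp only: Im_exp_cis)
    then have "sin (Im (Ln Y) + (pi - \<psi>)) < 0" by (simp add: mult_less_0_iff)
    then have "Im (Ln Y) + (pi - \<psi>) < 0"
      using sin_neg_imp_neg[of "Im (Ln Y) + (pi - \<psi>)"] m 3 LV ab by (simp add: \<psi>_def)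
    then show ?thesis using Y0 m ab LV by (intro exI[of _ "Ln Y"]) (auto simp: Y_def \<psi>_def)
  qed
qed



definition ginv :: "real \<Rightarrow> complex \<Rightarrow> real \<Rightarrow> real \<Rightarrow> complex \<Rightarrow> complex" where
  "ginv \<alpha> s r \<kappa> w = -1 / exp ((Ln (exp (-(\<i> * of_real \<kappa>)) *
      ((1 - (1 - s * exp (of_real \<alpha> * Ln (-1/w)) / of_real r) powr of_real r) / s))
      + \<i> * of_real \<kappa>) / of_real \<alpha>)"

lemma Im_minus_inv_pos:
  assumes "0 < Im z" shows "0 < Im (-1/z)"
proof -
  have "0 < Re z * Re z + Im z * Im z" using assms by (simp add: add_nonneg_pos)
  then show ?thesis using assms by (simp add: Im_divide power2_eq_square)
qed

context
  fixes \<alpha> r :: real and s :: complex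
  assumes \<alpha>: "0 < \<alpha>" "\<alpha> \<le> 2" and s0: "s \<noteq> 0" and a0: "0 \<le> Arg s" and api: "Arg s \<le> pi"
    and bpi: "pi \<le> Arg s + \<alpha>*pi" and b2: "Arg s + \<alpha>*pi \<le> 2*pi"
    and r1: "1 \<le> r" and ra: "r*\<alpha> \<le> 2" and r2: "r \<le> 2"
begin

lemma left_inv:
  assumes z: "0 < Im z"
  shows "ginv \<alpha> s r (pi - Arg s + r*(Arg s + \<alpha>*pi/2 - pi)) (1 / mu_G \<alpha> s r z) = z"
proof -
  define a where "a = Arg s"
  define b where "b = Arg s + \<alpha>*pi"
  define \<kappa> where "\<kappa> = pi - Arg s + r*(Arg s + \<alpha>*pi/2 - pi)"
  have ab: "0 \<le> a" "a \<le> pi" "pi \<le> b" "b \<le> 2*pi" using a0 api bpi b2 by (auto simp: a_def b_def)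
  have ba: "b - a = \<alpha>*pi" by (simp add: a_def b_def)
  have Ims: "Im (Ln s) = a" using s0 by (simp add: a_def Arg_eq_Im_Ln)
  have rpos: "0 < r" using r1 by simp
  define u where "u = -1/z"
  have u: "0 < Im u" using Im_minus_inv_pos[OF z] by (simp add: u_def)
  define Lu where "Lu = Ln u"
  have Lu: "0 < Im Lu" "Im Lu < pi" using Im_Ln_pos[OF u] by (auto simp: Lu_def)
  have u0: "u \<noteq> 0" using u by auto
  have uLu: "u = exp Lu" using u0 by (simp add: Lu_def)
  have p1: "pow1 (-1/z) \<alpha> = exp (of_real \<alpha> * Lu)"
    unfolding u_def[symmetric] uLu using Lu by (intro pow1_exp) auto
  define LW where "LW = Ln s + of_real \<alpha> * Lu"
  have W: "s * pow1 (-1/z) \<alpha> = exp LW" unfolding p1 using s0 by (simp add: LW_def exp_add)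
  have aLu: "0 < \<alpha> * Im Lu" "\<alpha> * Im Lu < \<alpha> * pi" using Lu \<alpha> by auto
  have LWb: "a < Im LW" "Im LW < b" using aLu Ims by (auto simp: LW_def b_def a_def)
  have upT: "\<exists>l. 1 - (1 - of_real \<rho> * cis \<psi>) powr of_real (1/r) = exp l \<and> pi - 1*c < Im l \<and> Im l < pi"
    if "0 < c" "c \<le> pi" "1*c \<le> 2*pi" "0 < \<rho>" "pi - c < \<psi>" "\<psi> < pi" for c \<rho> \<psi>
    using up_T[of "1/r" c \<rho> \<psi>] that r1 by auto
  obtain LT where LT: "1 - (1 - exp LW) powr of_real (1/r) = exp LT"
      "pi - 1*(pi - a) < Im LT" "Im LT < pi + 1*(b - pi)"
    using wrapper[of 1 "1/r" a b LW, OF upT] ab ba LWb \<alpha> rpos by auto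
  have LTb: "a < Im LT" "Im LT < b" using LT by auto
  define LX where "LX = LT - Ln s"
  have X: "(1 - (1 - s * pow1 (-1/z) \<alpha>) powr complex_of_real (1/r)) / s = exp LX"
    unfolding W LT(1) using s0 by (simp add: LX_def exp_diff)
  have LXb: "0 < Im LX" "Im LX < \<alpha>*pi" using LTb Ims ba by (auto simp: LX_def)
  have "\<alpha>*pi \<le> 2*pi" using \<alpha> by simp
  then have "Im LX < 2*pi" using LXb by linarith
  then have pX: "pow1 (exp LX) (1/\<alpha>) = exp (of_real (1/\<alpha>) * LX)" using LXb by (intro pow1_exp) auto
  define Lv where "Lv = of_real (ln r / \<alpha>) + of_real (1/\<alpha>) * LX"
  have rp: "complex_of_real (r powr (1/\<alpha>)) = exp (of_real (ln r / \<alpha>))"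
    using rpos by (simp add: powr_def flip: exp_of_real)
  have muG: "mu_G \<alpha> s r z = - exp Lv"
    unfolding mu_G_def X pX rp by (simp add: Lv_def exp_add)
  have ImLv: "Im Lv = Im LX / \<alpha>" by (simp add: Lv_def)
  have Lvb: "0 < Im Lv" "Im Lv < pi" using LXb \<alpha> by (auto simp: ImLv field_simps)
  have w1: "-1 / (1 / mu_G \<alpha> s r z) = exp Lv" by (simp add: muG)
  have lnv: "Ln (exp Lv) = Lv" using Lvb by (intro Ln_exp) auto
  have "exp (of_real \<alpha> * Lv) = exp (of_real (ln r) + LX)"
    using \<alpha> by (simp add: Lv_def algebra_simps)
  also have "\<dots> = of_real r * exp LT / s" using rpos s0 by (simp add: exp_add exp_diff LX_def exp_of_real)
  finally have V: "s * exp (of_real \<alpha> * Ln (-1 / (1 / mu_G \<alpha> s r z))) / of_real r = exp LT"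
    unfolding w1 lnv using s0 rpos by simp
  obtain m where m: "1 - exp LW = exp m" "a - pi < Im m" "Im m < b - pi"
    using one_minus_exp[OF ab LWb] by auto
  have mb: "-pi < Im m" "Im m < pi" using m ab by auto
  have "(1 - exp LW) powr of_real (1/r) = exp (of_real (1/r) * m)"
  proof -
    have lm: "Ln (exp m) = m" using mb by (intro Ln_exp) auto
    show ?thesis unfolding m(1) powr_def lm by simp
  qed
  then have oneT: "1 - exp LT = exp (of_real (1/r) * m)" using LT(1)[symmetric] by simp
  have Imm: "Im (of_real (1/r) * m) = Im m / r" by simp
  have h1: "pi \<le> pi * r" using r1 by simp
  have h2: "Im m \<le> pi * r" "-(pi*r) < Im m" using h1 mb by linarith+
  then have "-pi < Im m / r" "Im m / r \<le> pi" using rpos by (simp_all add: field_simps)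
  then have "Ln (exp (of_real (1/r) * m)) = of_real (1/r) * m" by (intro Ln_exp) (auto simp: Imm)
  then have "(1 - exp LT) powr of_real r = exp m" using rpos
    by (simp add: oneT powr_def)
  then have Q: "(1 - (1 - exp LT) powr of_real r) / s = exp (of_real \<alpha> * Lu)"
    using m(1)[symmetric] s0 by (simp add: LW_def exp_add)
  have Imk: "Im (of_real \<alpha> * Lu - \<i> * of_real \<kappa>) = \<alpha> * Im Lu - \<kappa>" by simp
  have F5: "r*\<alpha>*pi \<le> 2*pi" using ra mult_right_mono[OF ra, of pi] by simp
  have F1: "\<kappa> - r*\<alpha>*pi/2 = - ((r - 1) * (pi - a))" by (simp add: \<kappa>_def a_def algebra_simps)
  have F2: "0 \<le> (r - 1) * (pi - a)" using r1 ab by simp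
  have F3: "\<kappa> + r*\<alpha>*pi/2 = (pi - a) + r * (b - pi)" by (simp add: \<kappa>_def a_def b_def algebra_simps)
  have F4: "b - pi \<le> r * (b - pi)" using r1 ab mult_right_mono[OF r1, of "b - pi"] by simp
  have kb: "-pi < \<alpha> * Im Lu - \<kappa>" "\<alpha> * Im Lu - \<kappa> < pi"
    using F1 F2 F3 F4 F5 aLu ba by linarith+
  have "exp (-(\<i> * of_real \<kappa>)) * exp (of_real \<alpha> * Lu) = exp (of_real \<alpha> * Lu - \<i> * of_real \<kappa>)"
    by (simp add: exp_diff exp_minus field_simps)
  moreover have "Ln (exp (of_real \<alpha> * Lu - \<i> * of_real \<kappa>)) = of_real \<alpha> * Lu - \<i> * of_real \<kappa>"
    using kb by (intro Ln_exp) (auto simp: Imk)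
  ultimately have "ginv \<alpha> s r \<kappa> (1 / mu_G \<alpha> s r z) = -1 / exp ((of_real \<alpha> * Lu) / of_real \<alpha>)"
    unfolding ginv_def V Q by simp
  also have "\<dots> = z" using \<alpha> by (simp add: uLu[symmetric] u_def)
  finally show ?thesis by (simp add: \<kappa>_def)
qed


lemma gform:
  assumes w: "0 < Im w"
  obtains Lv LV m l where "Ln (-1/w) = Lv" "0 < Im Lv" "Im Lv < pi" "LV = Ln s + of_real \<alpha> * Lv - of_real (ln r)"
     "s * exp (of_real \<alpha> * Ln (-1/w)) / of_real r = exp LV"
     "Arg s < Im LV" "Im LV < Arg s + \<alpha>*pi"
     "1 - exp LV = exp m" "Arg s - pi < Im m" "Im m < Arg s + \<alpha>*pi - pi"
     "1 - (1 - exp LV) powr of_real r = exp l"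
     "pi - r*(pi - Arg s) < Im l" "Im l < pi + r*(Arg s + \<alpha>*pi - pi)"
     "exp (-(\<i> * of_real (pi - Arg s + r*(Arg s + \<alpha>*pi/2 - pi)))) * ((1 - (1 - s * exp (of_real \<alpha> * Ln (-1/w)) / of_real r) powr of_real r) / s)
       = exp (l - Ln s - \<i> * of_real (pi - Arg s + r*(Arg s + \<alpha>*pi/2 - pi)))"
     "-pi < Im (l - Ln s - \<i> * of_real (pi - Arg s + r*(Arg s + \<alpha>*pi/2 - pi)))" "Im (l - Ln s - \<i> * of_real (pi - Arg s + r*(Arg s + \<alpha>*pi/2 - pi))) < pi"
proof -
  define \<kappa> where "\<kappa> = pi - Arg s + r*(Arg s + \<alpha>*pi/2 - pi)"
  define a where "a = Arg s"
  define b where "b = Arg s + \<alpha>*pi"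
  have ab: "0 \<le> a" "a \<le> pi" "pi \<le> b" "b \<le> 2*pi" using a0 api bpi b2 by (auto simp: a_def b_def)
  have ba: "b - a = \<alpha>*pi" by (simp add: a_def b_def)
  have Ims: "Im (Ln s) = a" using s0 by (simp add: a_def Arg_eq_Im_Ln)
  have rpos: "0 < r" using r1 by simp
  define v where "v = -1/w"
  have v: "0 < Im v" using Im_minus_inv_pos[OF w] by (simp add: v_def)
  define Lv where "Lv = Ln v"
  have Lv: "0 < Im Lv" "Im Lv < pi" using Im_Ln_pos[OF v] by (auto simp: Lv_def)
  define LV where "LV = Ln s + of_real \<alpha> * Lv - of_real (ln r)"
  have eLV: "s * exp (of_real \<alpha> * Ln (-1/w)) / of_real r = exp LV"
    unfolding v_def[symmetric] Lv_def[symmetric] using s0 rpos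
    by (simp add: LV_def exp_add exp_diff exp_of_real)
  have aLv: "0 < \<alpha> * Im Lv" "\<alpha> * Im Lv < \<alpha> * pi" using Lv \<alpha> by auto
  have LVb: "a < Im LV" "Im LV < b" using aLv Ims by (auto simp: LV_def b_def a_def)
  obtain m where m: "1 - exp LV = exp m" "a - pi < Im m" "Im m < b - pi"
    using one_minus_exp[OF ab LVb] by auto
  have F5: "r*\<alpha>*pi \<le> 2*pi" using ra mult_right_mono[OF ra, of pi] by simp
  have upTp: "\<exists>l. 1 - (1 - of_real \<rho> * cis \<psi>) powr of_real r = exp l \<and> pi - r*c < Im l \<and> Im l < pi"
    if "0 < c" "c \<le> pi" "r*c \<le> 2*pi" "0 < \<rho>" "pi - c < \<psi>" "\<psi> < pi" for c \<rho> \<psi>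
    using up_Tp[of r c \<rho> \<psi>] that r1 by auto
  have rba: "r*(b-a) \<le> 2*pi" using F5 ba by (simp add: mult.assoc)
  obtain l where l: "1 - (1 - exp LV) powr of_real r = exp l"
      "pi - r*(pi - a) < Im l" "Im l < pi + r*(b - pi)"
    using wrapper[of r r a b LV, OF upTp] ab rba LVb rpos by auto
  have e1: "exp (-(\<i> * of_real \<kappa>)) * ((1 - (1 - s * exp (of_real \<alpha> * Ln (-1/w)) / of_real r) powr of_real r) / s)
       = exp (l - Ln s - \<i> * of_real \<kappa>)"
    unfolding eLV l(1) using s0 by (simp add: exp_diff exp_add exp_minus field_simps)
  have F1: "\<kappa> - r*\<alpha>*pi/2 = - ((r - 1) * (pi - a))" by (simp add: \<kappa>_def a_def algebra_simps)
  have F3: "\<kappa> + r*\<alpha>*pi/2 = (pi - a) + r * (b - pi)" by (simp add: \<kappa>_def a_def b_def algebra_simps)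
  have F6: "r*(pi - a) + r*(b - pi) = r*\<alpha>*pi" using ba by (simp add: algebra_simps)
  have Imk: "Im (l - Ln s - \<i> * of_real \<kappa>) = Im l - a - \<kappa>" using Ims by simp
  have l2: "pi - r*(pi - a) < Im l" and l3: "Im l < pi + r*(b - pi)" using l by auto
  have F7: "(r-1)*(pi-a) = r*(pi-a) - (pi - a)" by (simp add: algebra_simps)
  have kb1: "-pi < Im l - a - \<kappa>" using F1 F5 F7 l2 by linarith
  have kb2: "Im l - a - \<kappa> < pi" using F3 F5 F6 l3 by linarith
  note kb = kb1 kb2
  show thesis
    using Lv LVb m l e1 kb Imk eLV
    by (intro that[of Lv LV m l]) (simp_all add: v_def Lv_def LV_def a_def b_def \<kappa>_def)
qed

lemma g_holo: "ginv \<alpha> s r (pi - Arg s + r*(Arg s + \<alpha>*pi/2 - pi)) holomorphic_on upper_half"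
proof -
  define \<kappa> where "\<kappa> = pi - Arg s + r*(Arg s + \<alpha>*pi/2 - pi)"
  have H1: "-1/w \<notin> \<real>\<^sub>\<le>\<^sub>0" if "w \<in> upper_half" for w
    using Im_minus_inv_pos[of w] that by (auto simp: upper_half_def complex_nonpos_Reals_iff)
  have H2: "1 - s * exp (of_real \<alpha> * Ln (-1/w)) / of_real r \<notin> \<real>\<^sub>\<le>\<^sub>0" if wU: "w \<in> upper_half" for w
  proof -
    obtain Lv LV m l where A: "Ln (-1/w) = Lv" "0 < Im Lv" "Im Lv < pi" "LV = Ln s + of_real \<alpha> * Lv - of_real (ln r)"
     "s * exp (of_real \<alpha> * Ln (-1/w)) / of_real r = exp LV"
     "Arg s < Im LV" "Im LV < Arg s + \<alpha>*pi"
     "1 - exp LV = exp m" "Arg s - pi < Im m" "Im m < Arg s + \<alpha>*pi - pi"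
     "1 - (1 - exp LV) powr of_real r = exp l"
     "pi - r*(pi - Arg s) < Im l" "Im l < pi + r*(Arg s + \<alpha>*pi - pi)"
     "exp (-(\<i> * of_real \<kappa>)) * ((1 - (1 - s * exp (of_real \<alpha> * Ln (-1/w)) / of_real r) powr of_real r) / s)
       = exp (l - Ln s - \<i> * of_real \<kappa>)"
     "-pi < Im (l - Ln s - \<i> * of_real \<kappa>)" "Im (l - Ln s - \<i> * of_real \<kappa>) < pi"
      unfolding \<kappa>_def by (rule gform[of w]) (use wU in \<open>auto simp: upper_half_def\<close>)
    have "1 - s * exp (of_real \<alpha> * Ln (-1/w)) / of_real r = exp m" using A(5) A(8) by simp
    moreover have "-pi < Im m" "Im m < pi" using A(9,10) a0 b2 by auto
    ultimately show ?thesis using exp_notin_nonpos[of m] by simp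
  qed
  have H3: "exp (-(\<i> * of_real \<kappa>)) * ((1 - (1 - s * exp (of_real \<alpha> * Ln (-1/w)) / of_real r) powr of_real r) / s)
     \<notin> \<real>\<^sub>\<le>\<^sub>0" if wU: "w \<in> upper_half" for w
  proof -
    obtain Lv LV m l where A: "Ln (-1/w) = Lv" "0 < Im Lv" "Im Lv < pi" "LV = Ln s + of_real \<alpha> * Lv - of_real (ln r)"
     "s * exp (of_real \<alpha> * Ln (-1/w)) / of_real r = exp LV"
     "Arg s < Im LV" "Im LV < Arg s + \<alpha>*pi"
     "1 - exp LV = exp m" "Arg s - pi < Im m" "Im m < Arg s + \<alpha>*pi - pi"
     "1 - (1 - exp LV) powr of_real r = exp l"
     "pi - r*(pi - Arg s) < Im l" "Im l < pi + r*(Arg s + \<alpha>*pi - pi)"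
     "exp (-(\<i> * of_real \<kappa>)) * ((1 - (1 - s * exp (of_real \<alpha> * Ln (-1/w)) / of_real r) powr of_real r) / s)
       = exp (l - Ln s - \<i> * of_real \<kappa>)"
     "-pi < Im (l - Ln s - \<i> * of_real \<kappa>)" "Im (l - Ln s - \<i> * of_real \<kappa>) < pi"
      unfolding \<kappa>_def by (rule gform[of w]) (use wU in \<open>auto simp: upper_half_def\<close>)
    show ?thesis unfolding A(14) using A(15,16) exp_notin_nonpos by blast
  qed
  have eq: "ginv \<alpha> s r \<kappa> = (\<lambda>w. -1 / exp ((Ln (exp (-(\<i> * of_real \<kappa>)) *
      ((1 - (1 - s * exp (of_real \<alpha> * Ln (-1/w)) / of_real r) powr of_real r) / s))
      + \<i> * of_real \<kappa>) / of_real \<alpha>))"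
    by (rule ext) (simp add: ginv_def)
  have "(\<lambda>w. -1 / exp ((Ln (exp (-(\<i> * of_real \<kappa>)) *
      ((1 - (1 - s * exp (of_real \<alpha> * Ln (-1/w)) / of_real r) powr of_real r) / s))
      + \<i> * of_real \<kappa>) / of_real \<alpha>)) holomorphic_on upper_half"
    using \<alpha> s0 r1
    by (intro holomorphic_intros H1 H2 H3) (auto simp: upper_half_def)
  then show ?thesis using eq by (simp add: \<kappa>_def)
qed

lemma g_inj: "inj_on (ginv \<alpha> s r (pi - Arg s + r*(Arg s + \<alpha>*pi/2 - pi))) upper_half"
proof (rule inj_onI)
  define \<kappa> where "\<kappa> = pi - Arg s + r*(Arg s + \<alpha>*pi/2 - pi)"
  define a where "a = Arg s"
  define b where "b = Arg s + \<alpha>*pi"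
  have Ims: "Im (Ln s) = a" using s0 by (simp add: a_def Arg_eq_Im_Ln)
  have rpos: "0 < r" using r1 by simp
  have F5: "r*\<alpha>*pi \<le> 2*pi" using ra mult_right_mono[OF ra, of pi] by simp
  have val: "ginv \<alpha> s r \<kappa> w = -1 / exp ((l - Ln s) / of_real \<alpha>)"
    if "exp (-(\<i> * of_real \<kappa>)) * ((1 - (1 - s * exp (of_real \<alpha> * Ln (-1/w)) / of_real r) powr of_real r) / s)
       = exp (l - Ln s - \<i> * of_real \<kappa>)"
      "-pi < Im (l - Ln s - \<i> * of_real \<kappa>)" "Im (l - Ln s - \<i> * of_real \<kappa>) < pi" for w l
  proof -
    have "Ln (exp (l - Ln s - \<i> * of_real \<kappa>)) = l - Ln s - \<i> * of_real \<kappa>"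
      using that by (intro Ln_exp) auto
    then show ?thesis unfolding ginv_def that(1) by simp
  qed
  fix w1 w2 assume w1: "w1 \<in> upper_half" and w2: "w2 \<in> upper_half"
    and eq: "ginv \<alpha> s r (pi - Arg s + r*(Arg s + \<alpha>*pi/2 - pi)) w1 = ginv \<alpha> s r (pi - Arg s + r*(Arg s + \<alpha>*pi/2 - pi)) w2"
  obtain Lv1 LV1 m1 l1 where A: "Ln (-1/w1) = Lv1" "0 < Im Lv1" "Im Lv1 < pi" "LV1 = Ln s + of_real \<alpha> * Lv1 - of_real (ln r)"
     "s * exp (of_real \<alpha> * Ln (-1/w1)) / of_real r = exp LV1"
     "Arg s < Im LV1" "Im LV1 < Arg s + \<alpha>*pi"
     "1 - exp LV1 = exp m1" "Arg s - pi < Im m1" "Im m1 < Arg s + \<alpha>*pi - pi"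
     "1 - (1 - exp LV1) powr of_real r = exp l1"
     "pi - r*(pi - Arg s) < Im l1" "Im l1 < pi + r*(Arg s + \<alpha>*pi - pi)"
     "exp (-(\<i> * of_real \<kappa>)) * ((1 - (1 - s * exp (of_real \<alpha> * Ln (-1/w1)) / of_real r) powr of_real r) / s)
       = exp (l1 - Ln s - \<i> * of_real \<kappa>)"
     "-pi < Im (l1 - Ln s - \<i> * of_real \<kappa>)" "Im (l1 - Ln s - \<i> * of_real \<kappa>) < pi"
    unfolding \<kappa>_def by (rule gform[of w1]) (use w1 in \<open>auto simp: upper_half_def\<close>)
  obtain Lv2 LV2 m2 l2 where B: "Ln (-1/w2) = Lv2" "0 < Im Lv2" "Im Lv2 < pi" "LV2 = Ln s + of_real \<alpha> * Lv2 - of_real (ln r)"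
     "s * exp (of_real \<alpha> * Ln (-1/w2)) / of_real r = exp LV2"
     "Arg s < Im LV2" "Im LV2 < Arg s + \<alpha>*pi"
     "1 - exp LV2 = exp m2" "Arg s - pi < Im m2" "Im m2 < Arg s + \<alpha>*pi - pi"
     "1 - (1 - exp LV2) powr of_real r = exp l2"
     "pi - r*(pi - Arg s) < Im l2" "Im l2 < pi + r*(Arg s + \<alpha>*pi - pi)"
     "exp (-(\<i> * of_real \<kappa>)) * ((1 - (1 - s * exp (of_real \<alpha> * Ln (-1/w2)) / of_real r) powr of_real r) / s)
       = exp (l2 - Ln s - \<i> * of_real \<kappa>)"
     "-pi < Im (l2 - Ln s - \<i> * of_real \<kappa>)" "Im (l2 - Ln s - \<i> * of_real \<kappa>) < pi"
    unfolding \<kappa>_def by (rule gform[of w2]) (use w2 in \<open>auto simp: upper_half_def\<close>)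
  have "-1 / exp ((l1 - Ln s) / of_real \<alpha>) = -1 / exp ((l2 - Ln s) / of_real \<alpha>)"
    using eq val[OF A(14-16)] val[OF B(14-16)] by (simp add: \<kappa>_def)
  then have e1: "exp ((l1 - Ln s) / of_real \<alpha>) = exp ((l2 - Ln s) / of_real \<alpha>)" by simp
  have Imd: "Im ((l - Ln s) / of_real \<alpha>) = (Im l - a) / \<alpha>" for l using Ims by simp
  have F6: "r*(pi - a) + r*(b - pi) = r*\<alpha>*pi" by (simp add: a_def b_def algebra_simps)
  have "\<bar>Im l1 - Im l2\<bar> < r*\<alpha>*pi" using A(12,13) B(12,13) F6 unfolding a_def b_def by linarith
  then have "\<bar>Im l1 - Im l2\<bar> / \<alpha> < r*pi" using \<alpha> by (simp add: field_simps)
  moreover have "r*pi \<le> 2*pi" using r2 by simp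
  ultimately have lt: "\<bar>Im l1 - Im l2\<bar> / \<alpha> < 2*pi" by linarith
  have "(Im l1 - a)/\<alpha> - (Im l2 - a)/\<alpha> = (Im l1 - Im l2) / \<alpha>" by (simp add: diff_divide_distrib)
  then have "\<bar>(Im l1 - a)/\<alpha> - (Im l2 - a)/\<alpha>\<bar> = \<bar>Im l1 - Im l2\<bar> / \<alpha>" using \<alpha> by (simp add: abs_divide)
  then have "\<bar>(Im l1 - a)/\<alpha> - (Im l2 - a)/\<alpha>\<bar> < 2*pi" using lt by simp
  then have "\<bar>Im ((l1 - Ln s) / of_real \<alpha>) - Im ((l2 - Ln s) / of_real \<alpha>)\<bar> < 2*pi"
    unfolding Imd .
  then have "(l1 - Ln s) / of_real \<alpha> = (l2 - Ln s) / of_real \<alpha>"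
    using e1 by (rule exp_complex_eqI)
  then have "l1 = l2" using \<alpha> by simp
  moreover have "(1 - exp LV1) powr of_real r = 1 - exp l1" using A(11)[symmetric] by simp
  moreover have "(1 - exp LV2) powr of_real r = 1 - exp l2" using B(11)[symmetric] by simp
  ultimately have p: "(1 - exp LV1) powr of_real r = (1 - exp LV2) powr of_real r" by simp
  have pw: "(1 - exp LV) powr of_real r = exp (of_real r * m)"
    if "1 - exp LV = exp m" "Arg s - pi < Im m" "Im m < Arg s + \<alpha>*pi - pi" for LV m
  proof -
    have "Ln (exp m) = m" using that a0 b2 by (intro Ln_exp) auto
    then show ?thesis unfolding that(1) powr_def by simp
  qed
  have e2: "exp (of_real r * m1) = exp (of_real r * m2)" using p pw[OF A(8-10)] pw[OF B(8-10)] by simp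
  have "\<bar>Im m1 - Im m2\<bar> < \<alpha>*pi" using A(9,10) B(9,10) by linarith
  then have "r * \<bar>Im m1 - Im m2\<bar> < r*(\<alpha>*pi)" using rpos by simp
  moreover have "r*(\<alpha>*pi) = r*\<alpha>*pi" by (simp add: mult.assoc)
  ultimately have lt2: "r * \<bar>Im m1 - Im m2\<bar> < 2*pi" using F5 by linarith
  have "\<bar>Im (of_real r * m1) - Im (of_real r * m2)\<bar> = r * \<bar>Im m1 - Im m2\<bar>"
    using rpos by (simp add: right_diff_distrib[symmetric] abs_mult)
  then have "\<bar>Im (of_real r * m1) - Im (of_real r * m2)\<bar> < 2*pi" using lt2 by simp
  then have "of_real r * m1 = of_real r * m2" using e2 by (rule exp_complex_eqI)
  then have "m1 = m2" using rpos by simp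
  moreover have "exp LV1 = 1 - exp m1" using A(8)[symmetric] by simp
  moreover have "exp LV2 = 1 - exp m2" using B(8)[symmetric] by simp
  ultimately have ee: "exp LV1 = exp LV2" by simp
  have "\<alpha>*pi \<le> 2*pi" using \<alpha> by simp
  then have lt3: "\<bar>Im LV1 - Im LV2\<bar> < 2*pi" using A(6,7) B(6,7) by linarith
  have "LV1 = LV2" using lt3 ee by (rule exp_complex_eqI)
  then have "Lv1 = Lv2" using A(4) B(4) \<alpha> by simp
  then have "Ln (-1/w1) = Ln (-1/w2)" using A(1) B(1) by simp
  then have "exp (Ln (-1/w1)) = exp (Ln (-1/w2))" by simp
  moreover have "w1 \<noteq> 0" "w2 \<noteq> 0" using w1 w2 by (auto simp: upper_half_def)
  ultimately show "w1 = w2" by simp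
qed
end


theorem theorem5p3:
  fixes \<alpha> r :: real and s :: complex and \<mu> :: "real measure"
  assumes "admissible \<alpha> s"
    and "prob_space \<mu>" and "sets \<mu> = sets borel"
    and "\<forall>z\<in>upper_half. cauchy_transform \<mu> z = mu_G \<alpha> s r z"
    and "(0 < \<alpha> \<and> \<alpha> \<le> 1 \<and> 1 \<le> r \<and> r \<le> 2) \<or> (1 \<le> \<alpha> \<and> \<alpha> \<le> 2 \<and> 1 \<le> r \<and> r \<le> 2 / \<alpha>)"
  shows "UI \<mu>"
proof -
  have \<alpha>: "0 < \<alpha>" "\<alpha> \<le> 2" and s0: "s \<noteq> 0"
    and adm: "(\<alpha> \<le> 1 \<and> (1 - \<alpha>) * pi \<le> Arg s \<and> Arg s \<le> pi) \<or>
      (1 < \<alpha> \<and> 0 \<le> Arg s \<and> Arg s \<le> (2 - \<alpha>) * pi)"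
    using assms(1) unfolding admissible_def by auto
  have e1: "(1 - \<alpha>) * pi = pi - \<alpha>*pi" and e2: "(2 - \<alpha>) * pi = 2*pi - \<alpha>*pi"
    by (simp_all add: algebra_simps)
  have A: "0 \<le> Arg s \<and> Arg s \<le> pi \<and> pi \<le> Arg s + \<alpha>*pi \<and> Arg s + \<alpha>*pi \<le> 2*pi"
  proof (cases "\<alpha> \<le> 1")
    case True
    have p1: "\<alpha>*pi \<le> pi" using True by simp
    have p0: "0 < \<alpha>*pi" using \<alpha> by simp
    from adm True have "(1 - \<alpha>) * pi \<le> Arg s" "Arg s \<le> pi" by auto
    then show ?thesis using p1 p0 e1 by linarith
  next
    case False
    have p1: "pi \<le> \<alpha>*pi" using False by simp
    from adm False have "0 \<le> Arg s" "Arg s \<le> (2 - \<alpha>) * pi" by auto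
    then show ?thesis using p1 e2 by linarith
  qed
  have R: "1 \<le> r \<and> r*\<alpha> \<le> 2 \<and> r \<le> 2"
    using assms(5)
  proof
    assume h: "0 < \<alpha> \<and> \<alpha> \<le> 1 \<and> 1 \<le> r \<and> r \<le> 2"
    then have "r*\<alpha> \<le> r*1" by (intro mult_left_mono) auto
    then have "r*\<alpha> \<le> 2" using h by linarith
    then show ?thesis using h by auto
  next
    assume h: "1 \<le> \<alpha> \<and> \<alpha> \<le> 2 \<and> 1 \<le> r \<and> r \<le> 2 / \<alpha>"
    then have "r*\<alpha> \<le> 2" using \<alpha> by (simp add: field_simps)
    moreover have "2 / \<alpha> \<le> 2" using h by (simp add: field_simps)
    ultimately show ?thesis using h by auto
  qed
  define \<kappa> where "\<kappa> = pi - Arg s + r*(Arg s + \<alpha>*pi/2 - pi)"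
  define g where "g = ginv \<alpha> s r \<kappa>"
  have F: "F_transform \<mu> z = 1 / mu_G \<alpha> s r z" if "z \<in> upper_half" for z
    using assms(4) that by (simp add: F_transform_def)
  have linv: "g (F_transform \<mu> z) = z" if "z \<in> upper_half" for z
    using left_inv[of \<alpha> s r z] \<alpha> s0 A R that F[OF that]
    by (simp add: g_def \<kappa>_def upper_half_def)
  have "inj_on (F_transform \<mu>) upper_half"
    by (rule inj_on_inverseI[where g = g]) (rule linv)
  moreover have "g holomorphic_on upper_half"
    using g_holo[of \<alpha> s r] \<alpha> s0 A R by (simp add: g_def \<kappa>_def)
  moreover have "inj_on g upper_half"
    using g_inj[of \<alpha> s r] \<alpha> s0 A R by (simp add: g_def \<kappa>_def)
  ultimately show ?thesis unfolding UI_def using linv by blast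
qed


end
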